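(* Let $S$ be a finite pseudo-nilpotent semigroup. If $I$ is an ideal of $S$ such that $\mathcal{N}_I$ has no edges, then every element of $I$ is an isolated vertex of $\mathcal{N}_S$.
   Context: For a semigroup $S$, $S^1$ denotes $S$ with an identity adjoined (if $S$ has none). For $x,y\in S$ and $z_1,z_2,\ldots\in S^1$ define recursively $\lambda_0=x$, $\rho_0=y$, $\lambda_{n+1}=\lambda_n z_{n+1}\rho_n$, $\rho_{n+1}=\rho_n z_{n+1}\lambda_n$; write $\lambda_n(x,y,z_1,\ldots,z_n)$ and $\rho_n(x,y,z_1,\ldots,z_n)$. A semigroup $S$ is nilpotent (in the sense of Mal'cev) if there is a positive integer $n$ with $\lambda_n(a,b,c_1,\ldots,c_n)=\rho_n(a,b,c_1,\ldots,c_n)$ for all $a,b\in S$ and $c_1,\ldots,c_n\in S^1$. $\langle X\rangle$ denotes the subsemigroup generated by $X$. The upper non-nilpotent graph $\mathcal{N}_S$ has vertex set $S$, with an edge between $x$ and $y$ iff $\langle x,y\rangle$ is not nilpotent. The empty set is regarded as an ideal; for an ideal $I$ of $S$, $S/I$ is the Rees factor semigroup, with $S/\emptyset=S$. A semigroup $S$ is pseudo-nilpotent if the following holds: whenever $x,y\in S$, $w_1,\ldots,w_m\in S^1$, $T$ is the subsemigroup generated by $x,y$ and those $w_i$ lying in $S$, $I$ is an ideal (possibly empty) of $T$, and $t<m$ are non-negative integers such that, writing $\lambda_k=\lambda_k(x,y,w_1,\ldots,w_k)$ and $\rho_k=\rho_k(x,y,w_1,\ldots,w_k)$, one has $\lambda_t\neq\rho_t$,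 $(\lambda_t,\rho_t)=(\lambda_m,\rho_m)$ and $\lambda_m,\rho_m\notin I$, then for every $0\le i\le m$ there is an edge in $\mathcal{N}_{T/I}$ between (the images of) $\lambda_i$ and $\rho_i$. *)

theory Defs
  imports Main
begin

definition semigroup_on :: "'a set \<Rightarrow> ('a \<Rightarrow> 'a \<Rightarrow> 'a) \<Rightarrow> bool" where
  "semigroup_on S f \<longleftrightarrow> (\<forall>x\<in>S. \<forall>y\<in>S. f x y \<in> S) \<and>
     (\<forall>x\<in>S. \<forall>y\<in>S. \<forall>z\<in>S. f (f x y) z = f x (f y z))"

text \<open>Elements of S^1 are represented as 'a option: None is the adjoined identity,
  Some z with z in S an element of S.\<close>
definition in_S1 :: "'a set \<Rightarrow> 'a option \<Rightarrow> bool" where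
  "in_S1 S z \<longleftrightarrow> (case z of None \<Rightarrow> True | Some a \<Rightarrow> a \<in> S)"

fun mul3 :: "('a \<Rightarrow> 'a \<Rightarrow> 'a) \<Rightarrow> 'a \<Rightarrow> 'a option \<Rightarrow> 'a \<Rightarrow> 'a" where
  "mul3 f a None b = f a b"
| "mul3 f a (Some z) b = f (f a z) b"

text \<open>lam_rho f x y z n = (lambda_n, rho_n) for x, y and z_1, z_2, ... (z 0 is unused).\<close>
fun lam_rho :: "('a \<Rightarrow> 'a \<Rightarrow> 'a) \<Rightarrow> 'a \<Rightarrow> 'a \<Rightarrow> (nat \<Rightarrow> 'a option) \<Rightarrow> nat \<Rightarrow> 'a \<times> 'a" where
  "lam_rho f x y z 0 = (x, y)"
| "lam_rho f x y z (Suc n) =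
     (let (l, r) = lam_rho f x y z n in (mul3 f l (z (Suc n)) r, mul3 f r (z (Suc n)) l))"

definition lam :: "('a \<Rightarrow> 'a \<Rightarrow> 'a) \<Rightarrow> 'a \<Rightarrow> 'a \<Rightarrow> (nat \<Rightarrow> 'a option) \<Rightarrow> nat \<Rightarrow> 'a" where
  "lam f x y z n = fst (lam_rho f x y z n)"

definition rho :: "('a \<Rightarrow> 'a \<Rightarrow> 'a) \<Rightarrow> 'a \<Rightarrow> 'a \<Rightarrow> (nat \<Rightarrow> 'a option) \<Rightarrow> nat \<Rightarrow> 'a" where
  "rho f x y z n = snd (lam_rho f x y z n)"

definition nilpotent :: "'a set \<Rightarrow> ('a \<Rightarrow> 'a \<Rightarrow> 'a) \<Rightarrow> bool" where
  "nilpotent S f \<longleftrightarrow> (\<exists>n>0. \<forall>a\<in>S. \<forall>b\<in>S. \<forall>c. (\<forall>i\<in>{1..n}. in_S1 S (c i)) \<longrightarrow>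
       lam f a b c n = rho f a b c n)"

inductive_set gen :: "('a \<Rightarrow> 'a \<Rightarrow> 'a) \<Rightarrow> 'a set \<Rightarrow> 'a set" for f X where
  gen_base: "x \<in> X \<Longrightarrow> x \<in> gen f X"
| gen_mult: "x \<in> gen f X \<Longrightarrow> y \<in> gen f X \<Longrightarrow> f x y \<in> gen f X"

definition nn_edge :: "'a set \<Rightarrow> ('a \<Rightarrow> 'a \<Rightarrow> 'a) \<Rightarrow> 'a \<Rightarrow> 'a \<Rightarrow> bool" where
  "nn_edge S f x y \<longleftrightarrow> x \<in> S \<and> y \<in> S \<and> \<not> nilpotent (gen f {x, y}) f"

definition is_ideal :: "'a set \<Rightarrow> ('a \<Rightarrow> 'a \<Rightarrow> 'a) \<Rightarrow> 'a set \<Rightarrow> bool" where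
  "is_ideal S f I \<longleftrightarrow> I \<subseteq> S \<and> (\<forall>s\<in>S. \<forall>i\<in>I. f s i \<in> I \<and> f i s \<in> I)"

text \<open>Rees factor semigroup T/I on 'a option: None is the zero (the class of I),
  Some x for x in T - I.  For I empty it is (a copy of) T itself.\<close>
definition rees :: "'a set \<Rightarrow> 'a set \<Rightarrow> 'a option set" where
  "rees T I = (if I = {} then Some ` T else insert None (Some ` (T - I)))"

fun rees_op :: "('a \<Rightarrow> 'a \<Rightarrow> 'a) \<Rightarrow> 'a set \<Rightarrow> 'a option \<Rightarrow> 'a option \<Rightarrow> 'a option" where
  "rees_op f I (Some x) (Some y) = (if f x y \<in> I then None else Some (f x y))"
| "rees_op f I _ _ = None"

definition rees_img :: "'a set \<Rightarrow> 'a \<Rightarrow> 'a option" where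
  "rees_img I x = (if x \<in> I then None else Some x)"

definition pseudo_nilpotent :: "'a set \<Rightarrow> ('a \<Rightarrow> 'a \<Rightarrow> 'a) \<Rightarrow> bool" where
  "pseudo_nilpotent S f \<longleftrightarrow>
    (\<forall>x\<in>S. \<forall>y\<in>S. \<forall>m w. (\<forall>i\<in>{1..m}. in_S1 S (w i)) \<longrightarrow>
      (let T = gen f ({x, y} \<union> {a. \<exists>i\<in>{1..m}. w i = Some a}) in
       \<forall>I t. is_ideal T f I \<longrightarrow> t < m \<longrightarrow>
         lam f x y w t \<noteq> rho f x y w t \<longrightarrow>
         (lam f x y w t, rho f x y w t) = (lam f x y w m, rho f x y w m) \<longrightarrow>
         lam f x y w m \<notin> I \<longrightarrow> rho f x y w m \<notin> I \<longrightarrow>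
         (\<forall>i\<le>m. nn_edge (rees T I) (rees_op f I)
                    (rees_img I (lam f x y w i)) (rees_img I (rho f x y w i)))))"

end

theory Submission imports Defs begin

lemma lam_Suc: "lam f x y z (Suc n) = mul3 f (lam f x y z n) (z (Suc n)) (rho f x y z n)"
  by (simp add: lam_def rho_def split_def Let_def)
lemma rho_Suc: "rho f x y z (Suc n) = mul3 f (rho f x y z n) (z (Suc n)) (lam f x y z n)"
  by (simp add: lam_def rho_def split_def Let_def)
lemma lam0[simp]: "lam f x y z 0 = x" and rho0[simp]: "rho f x y z 0 = y"
  by (simp_all add: lam_def rho_def)

lemma mul3_gen: "l \<in> gen f X \<Longrightarrow> r \<in> gen f X \<Longrightarrow> in_S1 (gen f X) z \<Longrightarrow> mul3 f l z r \<in> gen f X"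
  by (cases z) (auto simp: in_S1_def intro: gen_mult)

lemma lr_gen: "a \<in> gen f X \<Longrightarrow> b \<in> gen f X \<Longrightarrow> \<forall>i\<in>{1..n}. in_S1 (gen f X) (c i) \<Longrightarrow> k \<le> n \<Longrightarrow>
   lam f a b c k \<in> gen f X \<and> rho f a b c k \<in> gen f X"
  by (induction k) (auto simp: lam_Suc rho_Suc intro!: mul3_gen)

lemma eq_prop: "k \<le> j \<Longrightarrow> lam f a b c k = rho f a b c k \<Longrightarrow> lam f a b c j = rho f a b c j"
proof (induction j rule: dec_induct)
  case (step j) then show ?case by (simp add: lam_Suc rho_Suc)
qed simp

lemma gen_sub: "semigroup_on S f \<Longrightarrow> X \<subseteq> S \<Longrightarrow> gen f X \<subseteq> S"
proof
  fix u assume "semigroup_on S f" "X \<subseteq> S" "u \<in> gen f X"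
  from \<open>u \<in> gen f X\<close> show "u \<in> S" using \<open>X \<subseteq> S\<close> \<open>semigroup_on S f\<close>
    by (induction rule: gen.induct) (auto simp: semigroup_on_def)
qed

lemma gen_y_comm1: assumes "semigroup_on S f" "y \<in> S" "u \<in> gen f {y}" shows "f y u = f u y"
  using assms(3)
proof (induction rule: gen.induct)
  case (gen_mult u v)
  have us: "u \<in> S" "v \<in> S" using gen_sub[OF assms(1), of "{y}"] assms gen_mult by auto
  have "f y (f u v) = f (f y u) v" using assms us by (simp add: semigroup_on_def)
  also have "\<dots> = f (f u y) v" using gen_mult by simp
  also have "\<dots> = f u (f y v)" using assms us by (simp add: semigroup_on_def)
  also have "\<dots> = f u (f v y)" using gen_mult by simp
  also have "\<dots> = f (f u v) y" using assms us by (simp add: semigroup_on_def)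
  finally show ?case .
qed simp

lemma gen_y_comm: assumes "semigroup_on S f" "y \<in> S" "u \<in> gen f {y}" "v \<in> gen f {y}" shows "f u v = f v u"
  using assms(4)
proof (induction rule: gen.induct)
  case (gen_base v) then show ?case using gen_y_comm1[OF assms(1,2,3)] by simp
next
  case (gen_mult v w)
  have us: "u \<in> S" "v \<in> S" "w \<in> S" using gen_sub[OF assms(1), of "{y}"] assms gen_mult by auto
  have "f u (f v w) = f (f u v) w" using assms us by (simp add: semigroup_on_def)
  also have "\<dots> = f (f v u) w" using gen_mult by simp
  also have "\<dots> = f v (f u w)" using assms us by (simp add: semigroup_on_def)
  also have "\<dots> = f v (f w u)" using gen_mult by simp
  also have "\<dots> = f (f v w) u" using assms us by (simp add: semigroup_on_def)
  finally show ?case .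
qed

lemma gen_split: assumes "semigroup_on S f" "is_ideal S f I" "x \<in> I" "y \<in> S" "u \<in> gen f {x,y}"
  shows "u \<in> I \<or> u \<in> gen f {y}"
  using assms(5)
proof (induction rule: gen.induct)
  case (gen_base u) then show ?case using assms by (auto intro: gen.gen_base)
next
  case (gen_mult u v)
  have us: "u \<in> S" "v \<in> S" using gen_sub[OF assms(1), of "{x,y}"] assms gen_mult
    by (auto simp: is_ideal_def)
  show ?case using gen_mult us assms(2) by (auto simp: is_ideal_def intro: gen.gen_mult)
qed

lemma mul3_I: assumes "semigroup_on S f" "is_ideal S f I" "l \<in> S" "r \<in> S" "in_S1 S z" "l \<in> I \<or> r \<in> I \<or> z \<in> Some ` I"
  shows "mul3 f l z r \<in> I"
proof (cases z)
  case None then show ?thesis using assms by (auto simp: is_ideal_def)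
next
  case (Some w)
  have "w \<in> S" using assms Some by (simp add: in_S1_def)
  moreover have "f l w \<in> S" using assms(1,3) \<open>w\<in>S\<close> by (simp add: semigroup_on_def)
  ultimately show ?thesis using assms Some
    by (auto simp: is_ideal_def)
qed


lemma gen_some: "gen (rees_op f {}) (Some ` X) = Some ` gen f X"
proof
  show "gen (rees_op f {}) (Some ` X) \<subseteq> Some ` gen f X"
  proof
    fix u assume "u \<in> gen (rees_op f {}) (Some ` X)"
    then show "u \<in> Some ` gen f X"
      by (induction rule: gen.induct) (auto intro: gen.intros)
  qed
  show "Some ` gen f X \<subseteq> gen (rees_op f {}) (Some ` X)"
  proof
    fix u assume "u \<in> Some ` gen f X"
    then obtain v where v: "u = Some v" "v \<in> gen f X" by auto
    from v(2) have "Some v \<in> gen (rees_op f {}) (Some ` X)"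
    proof (induction rule: gen.induct)
      case (gen_mult x y)
      then have "rees_op f {} (Some x) (Some y) \<in> gen (rees_op f {}) (Some ` X)"
        by (intro gen.gen_mult)
      then show ?case by simp
    qed (auto intro: gen.intros)
    then show "u \<in> gen (rees_op f {}) (Some ` X)" using v by simp
  qed
qed

lemma mul3_some: "mul3 (rees_op f {}) (Some l) (map_option Some z) (Some r) = Some (mul3 f l z r)"
  by (cases z) auto

lemma lr_some: assumes "\<forall>i\<in>{1..n}. c i = map_option Some (c' i)" "k \<le> n"
  shows "lam (rees_op f {}) (Some a) (Some b) c k = Some (lam f a b c' k) \<and>
         rho (rees_op f {}) (Some a) (Some b) c k = Some (rho f a b c' k)"
  using assms(2)
proof (induction k)
  case (Suc k)
  have "c (Suc k) = map_option Some (c' (Suc k))" using assms(1) Suc by auto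
  then show ?case using Suc by (simp add: lam_Suc rho_Suc mul3_some)
qed simp

lemma nil_some: assumes "nilpotent (gen f X) f"
  shows "nilpotent (gen (rees_op f {}) (Some ` X)) (rees_op f {})"
proof -
  obtain n where n: "n > 0" "\<forall>a\<in>gen f X. \<forall>b\<in>gen f X. \<forall>c. (\<forall>i\<in>{1..n}. in_S1 (gen f X) (c i)) \<longrightarrow>
       lam f a b c n = rho f a b c n" using assms by (auto simp: nilpotent_def)
  show ?thesis unfolding nilpotent_def gen_some
  proof (intro exI[of _ n] conjI ballI allI impI)
    fix a' b' c assume a': "a' \<in> Some ` gen f X" and b': "b' \<in> Some ` gen f X"
      and c: "\<forall>i\<in>{1..n}. in_S1 (Some ` gen f X) (c i)"
    obtain a b where ab: "a' = Some a" "b' = Some b" "a \<in> gen f X" "b \<in> gen f X" using a' b' by auto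
    define c' where "c' i = map_option the (c i)" for i
    have cc: "\<forall>i\<in>{1..n}. c i = map_option Some (c' i)"
    proof
      fix i assume "i \<in> {1..n}"
      then have "in_S1 (Some ` gen f X) (c i)" using c by blast
      then show "c i = map_option Some (c' i)"
        by (cases "c i") (auto simp: c'_def in_S1_def)
    qed
    have c'': "\<forall>i\<in>{1..n}. in_S1 (gen f X) (c' i)"
    proof
      fix i assume "i \<in> {1..n}"
      then have "in_S1 (Some ` gen f X) (c i)" using c by blast
      then show "in_S1 (gen f X) (c' i)"
        by (cases "c i") (auto simp: c'_def in_S1_def)
    qed
    show "lam (rees_op f {}) a' b' c n = rho (rees_op f {}) a' b' c n"
      using lr_some[OF cc, of n] n ab c'' by simp
  qed (use n in simp)
qed


theorem lemma2p7:
  fixes S :: "'a set" and f :: "'a \<Rightarrow> 'a \<Rightarrow> 'a" and I :: "'a set"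
  assumes "finite S"
    and "semigroup_on S f"
    and "pseudo_nilpotent S f"
    and "is_ideal S f I"
    and "\<forall>x\<in>I. \<forall>y\<in>I. \<not> nn_edge I f x y"
  shows "\<forall>x\<in>I. \<forall>y\<in>S. \<not> nn_edge S f x y"
proof (intro ballI notI)
  fix x y assume xI: "x \<in> I" and yS: "y \<in> S" and e: "nn_edge S f x y"
  have IS: "I \<subseteq> S" using assms(4) by (simp add: is_ideal_def)
  have xS: "x \<in> S" using xI IS by auto
  define T where "T = gen f {x,y}"
  have TS: "T \<subseteq> S" unfolding T_def using gen_sub[OF assms(2)] xS yS by auto
  have fT: "finite T" using TS assms(1) finite_subset by auto
  have nn: "\<not> nilpotent T f" using e by (simp add: nn_edge_def T_def)
  define N where "N = card (T \<times> T)"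
  obtain a b c where ab: "a \<in> T" "b \<in> T" and c: "\<forall>i\<in>{1..N+1}. in_S1 T (c i)"
    and ne: "lam f a b c (N+1) \<noteq> rho f a b c (N+1)"
    using nn unfolding nilpotent_def by (metis add_gr_0 zero_less_one)
  have neK: "lam f a b c k \<noteq> rho f a b c k" if "k \<le> N+1" for k
    using eq_prop[OF that, of f a b c] ne by blast
  have inT: "lam f a b c k \<in> T \<and> rho f a b c k \<in> T" if "k \<le> N+1" for k
    using lr_gen[of a f "{x,y}" b "N+1" c k] ab c that unfolding T_def by blast
  have cS: "in_S1 S (c i)" if "i \<in> {1..N+1}" for i
  proof -
    have "in_S1 T (c i)" using c that by blast
    then show ?thesis using TS by (cases "c i") (auto simp: in_S1_def)
  qed
  have aS: "a \<in> S" "b \<in> S" using ab TS by auto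
  have I1: "lam f a b c 1 \<in> I \<and> rho f a b c 1 \<in> I"
  proof (cases "a \<in> I \<or> b \<in> I \<or> c 1 \<in> Some ` I")
    case True
    have "in_S1 S (c 1)" using cS by simp
    then show ?thesis using True mul3_I[OF assms(2,4)] aS
      by (auto simp: lam_Suc[where n=0, simplified] rho_Suc[where n=0, simplified])
  next
    case False
    have ay: "a \<in> gen f {y}" "b \<in> gen f {y}"
      using False gen_split[OF assms(2,4) xI yS] ab unfolding T_def by auto
    have c1: "in_S1 T (c 1)" using c by simp
    have eq: "lam f a b c 1 = rho f a b c 1"
    proof (cases "c 1")
      case None
      then show ?thesis using gen_y_comm[OF assms(2) yS ay]
        by (simp add: lam_Suc[where n=0, simplified] rho_Suc[where n=0, simplified])
    next
      case (Some z)
      have "z \<in> T" "z \<notin> I" using c1 Some False by (auto simp: in_S1_def)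
      then have zy: "z \<in> gen f {y}" using gen_split[OF assms(2,4) xI yS] unfolding T_def by auto
      have azy: "f a z \<in> gen f {y}" using ay zy by (auto intro: gen_mult)
      have "f (f a z) b = f b (f a z)" using gen_y_comm[OF assms(2) yS azy ay(2)] .
      also have "\<dots> = f b (f z a)" using gen_y_comm[OF assms(2) yS ay(1) zy] by simp
      also have "\<dots> = f (f b z) a"
        using assms(2) aS \<open>z \<in> T\<close> TS by (auto simp: semigroup_on_def)
      finally show ?thesis using Some
        by (simp add: lam_Suc[where n=0, simplified] rho_Suc[where n=0, simplified])
    qed
    then show ?thesis using neK[of 1] by simp
  qed
  have inI: "lam f a b c k \<in> I \<and> rho f a b c k \<in> I" if "1 \<le> k" "k \<le> N+1" for k
    using that
  proof (induction k rule: dec_induct)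
    case base then show ?case using I1 by simp
  next
    case (step k)
    have s: "lam f a b c k \<in> S" "rho f a b c k \<in> S" using step IS by auto
    have cs: "in_S1 S (c (Suc k))" using cS step by simp
    show ?case using step mul3_I[OF assms(2,4) s cs] mul3_I[OF assms(2,4) s(2,1) cs]
      by (simp add: lam_Suc rho_Suc)
  qed
  define g where "g k = (lam f a b c k, rho f a b c k)" for k
  have "\<not> inj_on g {1..N+1}"
  proof
    assume inj: "inj_on g {1..N+1}"
    have "g ` {1..N+1} \<subseteq> T \<times> T" using inT by (auto simp: g_def)
    then have "card {1..N+1} \<le> card (T \<times> T)" using card_inj_on_le[OF inj] fT by blast
    then show False by (simp add: N_def)
  qed
  then obtain t m where tm: "t \<in> {1..N+1}" "m \<in> {1..N+1}" "t < m" "g t = g m"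
    unfolding inj_on_def by (metis linorder_neqE_nat)
  define T' where "T' = gen f ({a, b} \<union> {u. \<exists>i\<in>{1..m}. c i = Some u})"
  have "\<forall>i\<in>{1..m}. in_S1 S (c i)" using cS tm by auto
  have "\<forall>i\<le>m. nn_edge (rees T' {}) (rees_op f {})
                    (rees_img {} (lam f a b c i)) (rees_img {} (rho f a b c i))"
  proof -
    have P: "\<forall>I t. is_ideal T' f I \<longrightarrow> t < m \<longrightarrow>
         lam f a b c t \<noteq> rho f a b c t \<longrightarrow>
         (lam f a b c t, rho f a b c t) = (lam f a b c m, rho f a b c m) \<longrightarrow>
         lam f a b c m \<notin> I \<longrightarrow> rho f a b c m \<notin> I \<longrightarrow>
         (\<forall>i\<le>m. nn_edge (rees T' I) (rees_op f I)
                    (rees_img I (lam f a b c i)) (rees_img I (rho f a b c i)))"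
      using assms(3) aS \<open>\<forall>i\<in>{1..m}. in_S1 S (c i)\<close>
      unfolding pseudo_nilpotent_def Let_def T'_def by blast
    have "is_ideal T' f {}" by (simp add: is_ideal_def)
    then show ?thesis using P tm neK[of t] by (simp add: g_def)
  qed
  then have "nn_edge (rees T' {}) (rees_op f {}) (Some (lam f a b c t)) (Some (rho f a b c t))"
    using tm by (auto simp: rees_img_def)
  then have nnl: "\<not> nilpotent (gen (rees_op f {}) (Some ` {lam f a b c t, rho f a b c t})) (rees_op f {})"
    by (simp add: nn_edge_def)
  have "lam f a b c t \<in> I" "rho f a b c t \<in> I" using inI tm by auto
  then have "nilpotent (gen f {lam f a b c t, rho f a b c t}) f"
    using assms(5) by (simp add: nn_edge_def)
  then show False using nil_some nnl by blast
qed

end
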